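(* The automorphism group $\Gamma(B)$ of the betweenness relation $B$ on $\mathbb Q\times\mathbb Z$ consists exactly of all positive permutations of $\mathbb Q\times\mathbb Z$ that initiate a strictly increasing map of $\mathbb Q$, together with all negative permutations of $\mathbb Q\times\mathbb Z$ that initiate a strictly decreasing map of $\mathbb Q$.
   Context: $\mathbb Q\times\mathbb Z$ denotes the set $\mathbb Q\times\mathbb Z$ with the lexicographic order: $(r,z)<(r',z')$ iff $r<r'$, or $r=r'$ and $z<z'$. $B(a,b,c)\iff(a<b<c)\vee(a>b>c)$ on $\mathbb Q\times\mathbb Z$, and $\Gamma(B)$ is the group of permutations of $\mathbb Q\times\mathbb Z$ preserving $B$. A vertical is a set $\{r\}\times\mathbb Z$. A permutation $g$ is systemic if it maps every vertical onto a vertical; it initiates the permutation $h$ of $\mathbb Q$ with $g(\{a\}\times\mathbb Z)=\{h(a)\}\times\mathbb Z$. A systemic permutation is positive if it preserves the order on each vertical and negative if it reverses the order on each vertical. *)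

theory Defs
  imports Complex_Main
begin

type_synonym qz = "rat \<times> int"

definition lexless :: "qz \<Rightarrow> qz \<Rightarrow> bool" where
  "lexless p q \<longleftrightarrow> fst p < fst q \<or> (fst p = fst q \<and> snd p < snd q)"

definition betw :: "qz \<Rightarrow> qz \<Rightarrow> qz \<Rightarrow> bool" where
  "betw a b c \<longleftrightarrow> (lexless a b \<and> lexless b c) \<or> (lexless c b \<and> lexless b a)"

definition GammaB :: "(qz \<Rightarrow> qz) set" where
  "GammaB = {g. bij g \<and> (\<forall>a b c. betw a b c \<longleftrightarrow> betw (g a) (g b) (g c))}"

definition vertical :: "rat \<Rightarrow> qz set" where
  "vertical r = {r} \<times> (UNIV :: int set)"

definition systemic :: "(qz \<Rightarrow> qz) \<Rightarrow> bool" where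
  "systemic g \<longleftrightarrow> bij g \<and> (\<forall>r. \<exists>r'. g ` vertical r = vertical r')"

definition initiated :: "(qz \<Rightarrow> qz) \<Rightarrow> rat \<Rightarrow> rat" where
  "initiated g a = (THE b. g ` vertical a = vertical b)"

definition positive_perm :: "(qz \<Rightarrow> qz) \<Rightarrow> bool" where
  "positive_perm g \<longleftrightarrow> systemic g \<and>
     (\<forall>r z z'. z < z' \<longrightarrow> lexless (g (r, z)) (g (r, z')))"

definition negative_perm :: "(qz \<Rightarrow> qz) \<Rightarrow> bool" where
  "negative_perm g \<longleftrightarrow> systemic g \<and>
     (\<forall>r z z'. z < z' \<longrightarrow> lexless (g (r, z')) (g (r, z)))"

end

theory Submission
  imports Defs "HOL-Library.Product_Lexorder"
begin

lemma lexless_less: "lexless p q \<longleftrightarrow> p < q"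
  by (cases p; cases q) (auto simp: lexless_def)

lemma betw_less: "betw a b c \<longleftrightarrow> (a < b \<and> b < c) \<or> (c < b \<and> b < a)"
  by (simp add: betw_def lexless_less)

lemma fin_iff: "fst p = fst q \<longleftrightarrow> finite {x. betw p x q}"
proof
  assume h: "fst p = fst q"
  have "{x. betw p x q} \<subseteq> {fst p} \<times> {min (snd p) (snd q) .. max (snd p) (snd q)}"
    using h by (cases p; cases q) (auto simp: betw_less)
  then show "finite {x. betw p x q}" by (rule finite_subset) auto
next
  assume f: "finite {x. betw p x q}"
  show "fst p = fst q"
  proof (rule ccontr)
    assume ne: "fst p \<noteq> fst q"
    obtain a b where ab: "a < b" "{x. betw p x q} = {x. betw a x b}" "fst a \<noteq> fst b"
    proof (cases "p < q")
      case True then show ?thesis using that[of p q] ne by auto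
    next
      case False then have "q < p" using ne by (metis neq_iff)
      then show ?thesis using that[of q p] ne by (auto simp: betw_less)
    qed
    have "fst a < fst b" using ab by (cases a; cases b) auto
    have "(\<lambda>z. (fst a, z)) ` {snd a<..} \<subseteq> {x. betw a x b}"
      using \<open>fst a < fst b\<close> by (cases a; cases b) (auto simp: betw_less)
    moreover have "infinite ((\<lambda>z. (fst a, z)) ` {snd a<..})"
      by (subst finite_image_iff) (auto simp: inj_on_def infinite_Ioi)
    ultimately show False using f ab(2) finite_subset by metis
  qed
qed

lemma G_bij: "g \<in> GammaB \<Longrightarrow> bij g" by (simp add: GammaB_def)
lemma G_betw: "g \<in> GammaB \<Longrightarrow> betw a b c \<longleftrightarrow> betw (g a) (g b) (g c)" unfolding GammaB_def by blast

lemma image_betw: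
  assumes g: "g \<in> GammaB"
  shows "g ` {x. betw p x q} = {y. betw (g p) y (g q)}"
proof
  show "g ` {x. betw p x q} \<subseteq> {y. betw (g p) y (g q)}" using G_betw[OF g] by blast
next
  show "{y. betw (g p) y (g q)} \<subseteq> g ` {x. betw p x q}"
  proof
    fix y assume y: "y \<in> {y. betw (g p) y (g q)}"
    obtain x where "y = g x" using G_bij[OF g] by (metis bij_pointE)
    then show "y \<in> g ` {x. betw p x q}" using y G_betw[OF g, of p x q] by auto
  qed
qed

lemma fst_pres:
  assumes g: "g \<in> GammaB"
  shows "fst (g p) = fst (g q) \<longleftrightarrow> fst p = fst q"
proof -
  have "inj g" using G_bij[OF g] bij_is_inj by blast
  then have "finite {x. betw p x q} \<longleftrightarrow> finite (g ` {x. betw p x q})"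
    by (simp add: finite_image_iff inj_on_subset)
  then show ?thesis using image_betw[OF g] fin_iff by metis
qed

lemma mono_or_anti:
  assumes g: "g \<in> GammaB"
  shows "(\<forall>a b. a < b \<longrightarrow> g a < g b) \<or> (\<forall>a b. a < b \<longrightarrow> g b < g a)"
proof -
  have inj: "inj g" using G_bij[OF g] bij_is_inj by blast
  define P where "P a b \<longleftrightarrow> g a < g b" for a b
  have ne: "g a \<noteq> g b" if "a < b" for a b using inj that by (metis less_irrefl injD)
  have tri: "P a b = P b c \<and> P a b = P a c" if "a < b" "b < c" for a b c
  proof -
    have "betw (g a) (g b) (g c)" using G_betw[OF g, of a b c] that by (auto simp: betw_less)
    then show ?thesis unfolding P_def betw_less by auto
  qed
  have L1: "P a b = P a x" if "a < b" "a < x" for a b x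
  proof -
    consider "x = b" | "b < x" | "x < b" by fastforce
    then show ?thesis using tri that by cases metis+
  qed
  have L2: "P a b = P y b" if "a < b" "y < b" for a b y
  proof -
    consider "y = a" | "a < y" | "y < a" by fastforce
    then show ?thesis using tri that by cases metis+
  qed
  have all: "P a b = P c d" if "a < b" "c < d" for a b c d
  proof -
    have "P a b = P (min a c) b" using L2 that by (metis min.strict_coboundedI1)
    also have "\<dots> = P (min a c) (max b d)" using L1 that
      by (metis max.strict_coboundedI1 min.strict_coboundedI1)
    also have "\<dots> = P c (max b d)" using L2 that
      by (metis max.strict_coboundedI1 max.strict_coboundedI2 min.strict_coboundedI1)
    also have "\<dots> = P c d" using L1 that by (metis max.strict_coboundedI2)
    finally show ?thesis .
  qed
  define a0 :: qz where "a0 = (0,0)"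
  define b0 :: qz where "b0 = (1,0)"
  have ab0: "a0 < b0" by (simp add: a0_def b0_def)
  show ?thesis
  proof (cases "P a0 b0")
    case True then show ?thesis using all ab0 unfolding P_def by blast
  next
    case False
    have "g b < g a" if "a < b" for a b
      using all[OF that ab0] False ne[OF that] unfolding P_def by auto
    then show ?thesis by blast
  qed
qed

lemma G_systemic:
  assumes g: "g \<in> GammaB"
  shows "systemic g"
  unfolding systemic_def
proof (intro conjI allI)
  show "bij g" using G_bij[OF g] .
  fix r
  have "g ` vertical r = vertical (fst (g (r,0)))"
  proof
    show "g ` vertical r \<subseteq> vertical (fst (g (r, 0)))"
    proof
      fix y assume "y \<in> g ` vertical r"
      then obtain z where y: "y = g (r,z)" by (auto simp: vertical_def)
      have "fst (g (r,z)) = fst (g (r,0))" using fst_pres[OF g, of "(r,z)" "(r,0)"] by simp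
      then show "y \<in> vertical (fst (g (r, 0)))" using y by (cases "g (r,z)") (auto simp: vertical_def)
    qed
  next
    show "vertical (fst (g (r, 0))) \<subseteq> g ` vertical r"
    proof
      fix y assume y: "y \<in> vertical (fst (g (r, 0)))"
      obtain x where x: "y = g x" using G_bij[OF g] by (metis bij_pointE)
      then have "fst x = r" using y fst_pres[OF g, of x "(r,0)"] by (auto simp: vertical_def)
      then show "y \<in> g ` vertical r" using x by (cases x) (auto simp: vertical_def)
    qed
  qed
  then show "\<exists>r'. g ` vertical r = vertical r'" by blast
qed

lemma vertical_inj: "vertical a = vertical b \<Longrightarrow> a = b"
  unfolding vertical_def by auto

lemma initiated_eq:
  assumes "systemic g"
  shows "initiated g r = fst (g (r,z))"
proof -
  obtain r' where r': "g ` vertical r = vertical r'" using assms unfolding systemic_def by blast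
  have "initiated g r = r'" unfolding initiated_def
  proof (rule the_equality)
    show "g ` vertical r = vertical r'" by (rule r')
  next
    fix b assume "g ` vertical r = vertical b" then show "b = r'" using r' vertical_inj by metis
  qed
  moreover have "g (r,z) \<in> vertical r'" using r'[symmetric] by (auto simp: vertical_def)
  ultimately show ?thesis by (auto simp: vertical_def)
qed

lemma mono_betw:
  assumes "bij g" "\<forall>a b. a < b \<longrightarrow> g a < g b"
  shows "g \<in> GammaB"
proof -
  have "a < b \<longleftrightarrow> g a < g b" for a b using assms(2) by (metis less_asym neq_iff)
  then show ?thesis using assms(1) by (auto simp: GammaB_def betw_less)
qed

lemma anti_betw:
  assumes "bij g" "\<forall>a b. a < b \<longrightarrow> g b < g a"
  shows "g \<in> GammaB"
proof -
  have "a < b \<longleftrightarrow> g b < g a" for a b using assms(2) by (metis less_asym neq_iff)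
  then show ?thesis using assms(1) by (auto simp: GammaB_def betw_less)
qed

theorem mainTheorem11:
  shows "GammaB =
    {g. positive_perm g \<and> (\<forall>a b. a < b \<longrightarrow> initiated g a < initiated g b)} \<union>
    {g. negative_perm g \<and> (\<forall>a b. a < b \<longrightarrow> initiated g b < initiated g a)}"
proof
  show "GammaB \<subseteq> {g. positive_perm g \<and> (\<forall>a b. a < b \<longrightarrow> initiated g a < initiated g b)} \<union>
    {g. negative_perm g \<and> (\<forall>a b. a < b \<longrightarrow> initiated g b < initiated g a)}"
  proof
    fix g assume g: "g \<in> GammaB"
    have sys: "systemic g" using G_systemic[OF g] .
    have ini: "initiated g r = fst (g (r,0))" for r using initiated_eq[OF sys] .
    have fne: "fst (g (a,0)) \<noteq> fst (g (b,0))" if "a \<noteq> b" for a b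
      using fst_pres[OF g, of "(a,0)" "(b,0)"] that by simp
    from mono_or_anti[OF g] show "g \<in> {g. positive_perm g \<and> (\<forall>a b. a < b \<longrightarrow> initiated g a < initiated g b)} \<union>
    {g. negative_perm g \<and> (\<forall>a b. a < b \<longrightarrow> initiated g b < initiated g a)}"
    proof
      assume m: "\<forall>a b. a < b \<longrightarrow> g a < g b"
      have "positive_perm g" using sys m by (auto simp: positive_perm_def lexless_less)
      moreover have "initiated g a < initiated g b" if "a < b" for a b
      proof -
        have "g (a,0) < g (b,0)" using m that by simp
        then have "fst (g (a,0)) \<le> fst (g (b,0))" by (auto simp: less_prod_def')
        then show ?thesis using fne[of a b] that ini by (simp add: order_le_neq_trans)
      qed
      ultimately show ?thesis by blast
    next
      assume m: "\<forall>a b. a < b \<longrightarrow> g b < g a"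
      have "negative_perm g" using sys m by (auto simp: negative_perm_def lexless_less)
      moreover have "initiated g b < initiated g a" if "a < b" for a b
      proof -
        have "g (b,0) < g (a,0)" using m that by simp
        then have "fst (g (b,0)) \<le> fst (g (a,0))" by (auto simp: less_prod_def')
        then show ?thesis using fne[of a b] that ini by (simp add: order_le_neq_trans)
      qed
      ultimately show ?thesis by blast
    qed
  qed
next
  show "{g. positive_perm g \<and> (\<forall>a b. a < b \<longrightarrow> initiated g a < initiated g b)} \<union>
    {g. negative_perm g \<and> (\<forall>a b. a < b \<longrightarrow> initiated g b < initiated g a)} \<subseteq> GammaB"
  proof
    fix g assume "g \<in> {g. positive_perm g \<and> (\<forall>a b. a < b \<longrightarrow> initiated g a < initiated g b)} \<union>
    {g. negative_perm g \<and> (\<forall>a b. a < b \<longrightarrow> initiated g b < initiated g a)}"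
    then consider "positive_perm g" "\<forall>a b. a < b \<longrightarrow> initiated g a < initiated g b"
      | "negative_perm g" "\<forall>a b. a < b \<longrightarrow> initiated g b < initiated g a" by blast
    then show "g \<in> GammaB"
    proof cases
      case 1
      have sys: "systemic g" using 1 by (simp add: positive_perm_def)
      have "g p < g q" if "p < q" for p q
      proof (cases p; cases q)
        fix r z r' z' assume pq: "p = (r,z)" "q = (r',z')"
        show ?thesis
        proof (cases "r = r'")
          case True then show ?thesis using 1 that pq by (auto simp: positive_perm_def lexless_less)
        next
          case False then have "r < r'" using that pq by auto
          then have "fst (g p) < fst (g q)" using 1 initiated_eq[OF sys] pq by metis
          then show ?thesis by (auto simp: less_prod_def')
        qed
      qed
      then show ?thesis using sys mono_betw by (auto simp: systemic_def)
    next
      case 2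
      have sys: "systemic g" using 2 by (simp add: negative_perm_def)
      have "g q < g p" if "p < q" for p q
      proof (cases p; cases q)
        fix r z r' z' assume pq: "p = (r,z)" "q = (r',z')"
        show ?thesis
        proof (cases "r = r'")
          case True then show ?thesis using 2 that pq by (auto simp: negative_perm_def lexless_less)
        next
          case False then have "r < r'" using that pq by auto
          then have "fst (g q) < fst (g p)" using 2 initiated_eq[OF sys] pq by metis
          then show ?thesis by (auto simp: less_prod_def')
        qed
      qed
      then show ?thesis using sys anti_betw by (auto simp: systemic_def)
    qed
  qed
qed

end
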